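(* Let $V$ be a vector space over $\mathbb{F}_2$ of finite dimension $n>1$, let $e=(e_i)_{i=1}^n$ be a basis of $V$, set $e_0=\sum_{i=1}^n e_i$ and \[ \xi_e=n+1+\sum_{i=0}^n X^{e_i}\in\mathbb{F}_2[V]. \] Then $\xi_e\in I^2[V]$ and $\mathrm{Pf}_2(\xi_e)=n-1$.
   Context: $\mathbb{F}_2[V]$ is the group algebra of $V$, elements $\sum_{v\in V}\alpha_vX^v$, $X^0=1$, $X^uX^v=X^{u+v}$; integers denote multiples of $1$ in $\mathbb{F}_2$. $I[V]$ is the kernel of the augmentation map $\sum\alpha_vX^v\mapsto\sum\alpha_v$, and $I^2[V]$ its square. A $2$-fold Pfister element is a product $(1+X^{u})(1+X^{v})$ with $u,v\in V$. For $\xi\in I^2[V]$, $\mathrm{Pf}_2(\xi)$ is the minimal number of terms in an expression of $\xi$ as a sum of $2$-fold Pfister elements. *)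

theory Defs
  imports Main "HOL-Library.Z2" "HOL-Library.Poly_Mapping"
begin

text \<open>The group algebra F_2[V] of an additive group V is the monoid algebra
  finitely supported functions, convolution product).\<close>

type_synonym 'v galg = "'v \<Rightarrow>\<^sub>0 bit"

definition X :: "'v::monoid_add \<Rightarrow> 'v galg" where
  "X v = Poly_Mapping.single v 1"

definition augmentation :: "'v galg \<Rightarrow> bit" where
  "augmentation \<xi> = (\<Sum>v\<in>Poly_Mapping.keys \<xi>. Poly_Mapping.lookup \<xi> v)"

definition augI :: "'v::monoid_add galg set" where
  "augI = {\<xi>. augmentation \<xi> = 0}"

definition augI2 :: "'v::monoid_add galg set" where
  "augI2 = {\<xi>. \<exists>k (a :: nat \<Rightarrow> 'v galg) b. (\<forall>i<k. a i \<in> augI \<and> b i \<in> augI)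
                 \<and> \<xi> = (\<Sum>i<k. a i * b i)}"

definition pfister2 :: "'v::monoid_add \<Rightarrow> 'v \<Rightarrow> 'v galg" where
  "pfister2 u v = (1 + X u) * (1 + X v)"

definition Pf2 :: "'v::monoid_add galg \<Rightarrow> nat" where
  "Pf2 \<xi> = (LEAST k. \<exists>u w :: nat \<Rightarrow> 'v. \<xi> = (\<Sum>i<k. pfister2 (u i) (w i)))"

end

theory Submission
  imports Defs
begin

lemma galg_add_self: "(f::'v galg) + f = 0"
  by (rule poly_mapping_eqI) (simp add: lookup_add)

lemma bit_add_self: "(b::bit) + b = 0"
  by (cases b) simp_all

definition sc :: "bit \<Rightarrow> 'v::ab_group_add \<Rightarrow> 'v" where
  "sc b v = (if b = 0 then 0 else v)"

lemma sc_add: assumes c2: "\<And>x::'v::ab_group_add. x + x = 0"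
  shows "sc (a+b) (v::'v) = sc a v + sc b v"
  by (cases a; cases b) (simp_all add: sc_def c2)

definition mom :: "'v::ab_group_add set \<Rightarrow> 'v galg \<Rightarrow> 'v" where
  "mom C f = (\<Sum>v\<in>C. sc (Poly_Mapping.lookup f v) v)"

lemma mom_add: assumes c2: "\<And>x::'v::ab_group_add. x + x = 0"
  shows "mom C (f + g) = mom C f + mom (C::'v set) g"
  by (simp only: mom_def lookup_add sc_add[OF c2] sum.distrib)

lemma mom_sum: assumes c2: "\<And>x::'v::ab_group_add. x + x = 0"
  shows "mom (C::'v set) (\<Sum>i<(k::nat). f i) = (\<Sum>i<k. mom C (f i))"
  by (induction k) (simp_all add: mom_add[OF c2], simp add: mom_def sc_def)

lemma mom_zero: "mom C 0 = 0"
  by (simp add: mom_def sc_def)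

lemma mom_X: assumes fin: "finite (UNIV::'v::ab_group_add set)"
  shows "mom (C::'v set) (X u) = (if u \<in> C then u else 0)"
proof -
  have "mom C (X u) = (\<Sum>v\<in>C. if v = u then u else 0)"
    unfolding mom_def X_def by (rule sum.cong) (auto simp: lookup_single when_def sc_def)
  also have "\<dots> = (if u \<in> C then u else 0)"
    using finite_subset[OF subset_UNIV fin] by (simp add: sum.delta')
  finally show ?thesis .
qed

lemma X_add: "X (u + w) = X u * X (w::'v::ab_group_add)"
  by (simp add: X_def mult_single)

lemma X_zero: "X (0::'v::ab_group_add) = 1"
  by (simp add: X_def)

lemma pf_expand: "pfister2 u w = 1 + X u + X w + X (u + (w::'v::ab_group_add))"
  by (simp add: pfister2_def X_add algebra_simps)

lemma mom_one: assumes fin: "finite (UNIV::'v::ab_group_add set)"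
  shows "mom (C::'v set) 1 = 0"
  using mom_X[OF fin, of C 0] by (simp add: X_zero)

lemma mom_of_nat: assumes fin: "finite (UNIV::'v::ab_group_add set)"
  and c2: "\<And>x::'v::ab_group_add. x + x = 0"
  shows "mom (C::'v set) (of_nat m) = 0"
  by (induction m) (simp_all add: mom_zero mom_add[OF c2] mom_one[OF fin])

lemma mom_pf: assumes fin: "finite (UNIV::'v::ab_group_add set)"
  and c2: "\<And>x::'v::ab_group_add. x + x = 0"
  and cl: "u \<in> C \<longleftrightarrow> w \<in> C" "u \<in> C \<longleftrightarrow> u + w \<in> C"
  shows "mom (C::'v set) (pfister2 u w) = 0"
proof -
  have e: "u + w + (u + w) = 0" by (rule c2)
  show ?thesis unfolding pf_expand
    using cl e by (simp add: mom_add[OF c2] mom_one[OF fin] mom_X[OF fin] add.assoc)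
qed


definition spn :: "'v::ab_group_add set \<Rightarrow> 'v set" where
  "spn G = (\<lambda>A. sum id A) ` Pow G"

lemma spn_zero: "0 \<in> spn G"
  unfolding spn_def by (rule image_eqI[of _ _ "{}"]) auto

lemma spn_base: "x \<in> G \<Longrightarrow> x \<in> spn G"
  unfolding spn_def by (rule image_eqI[of _ _ "{x}"]) auto

lemma spn_mono: "G \<subseteq> H \<Longrightarrow> spn G \<subseteq> spn H"
  unfolding spn_def by auto

lemma sum_symdiff:
  assumes c2: "\<And>x::'v::ab_group_add. x + x = 0" and fA: "finite A" and fB: "finite B"
  shows "sum id A + sum id B = sum id ((A - B) \<union> (B - (A::'v set)))"
proof -
  have 1: "sum id A = sum id (A \<inter> B) + sum id (A - B)" using fA by (rule sum.Int_Diff)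
  have 2: "sum id B = sum id (A \<inter> B) + sum id (B - A)" using fB by (metis Int_commute sum.Int_Diff)
  have 3: "sum id ((A - B) \<union> (B - A)) = sum id (A - B) + sum id (B - A)"
    using fA fB by (intro sum.union_disjoint) auto
  have 4: "sum id (A \<inter> B) + sum id (A \<inter> B) = 0" by (rule c2)
  have "sum id (A \<inter> B) + sum id (A - B) + (sum id (A \<inter> B) + sum id (B - A))
      = (sum id (A \<inter> B) + sum id (A \<inter> B)) + (sum id (A - B) + sum id (B - A))"
    by (simp add: ac_simps)
  then show ?thesis unfolding 1 2 3 using 4 by simp
qed

lemma spn_add:
  assumes c2: "\<And>x::'v::ab_group_add. x + x = 0" and fin: "finite (UNIV::'v set)"
    and "x \<in> spn G" "y \<in> spn (G::'v set)"
  shows "x + y \<in> spn G"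
proof -
  obtain A B where A: "A \<subseteq> G" "x = sum id A" and B: "B \<subseteq> G" "y = sum id B"
    using assms(3,4) unfolding spn_def by auto
  have fA: "finite A" "finite B" using finite_subset[OF subset_UNIV fin] by blast+
  show ?thesis unfolding A B sum_symdiff[OF c2 fA] spn_def using A B by auto
qed

lemma spn_sum:
  assumes c2: "\<And>x::'v::ab_group_add. x + x = 0" and fin: "finite (UNIV::'v set)"
  shows "finite S \<Longrightarrow> (\<And>i. i \<in> S \<Longrightarrow> f i \<in> spn (G::'v set)) \<Longrightarrow> sum f S \<in> spn G"
  by (induction S rule: finite_induct) (auto simp: spn_zero spn_add[OF c2 fin])

lemma spn_sub:
  assumes c2: "\<And>x::'v::ab_group_add. x + x = 0" and fin: "finite (UNIV::'v set)"
    and H: "H \<subseteq> spn (G::'v set)"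
  shows "spn H \<subseteq> spn G"
proof
  fix x assume "x \<in> spn H"
  then obtain A where A: "A \<subseteq> H" "x = sum id A" unfolding spn_def by auto
  have "finite A" using finite_subset[OF subset_UNIV fin] by blast
  then show "x \<in> spn G" unfolding A(2) using spn_sum[OF c2 fin, of A id G] A(1) H by auto
qed

lemma card_spn: assumes fin: "finite (G::'v::ab_group_add set)"
  shows "card (spn G) \<le> 2 ^ card G"
  unfolding spn_def using card_image_le[of "Pow G" "\<lambda>A. sum id A"] fin by (simp add: card_Pow)

lemma spn_exchange:
  assumes c2: "\<And>x::'v::ab_group_add. x + x = 0" and fin: "finite (UNIV::'v set)"
    and c: "(c::'v) \<in> spn D" "c \<in> spn Gc" "c \<noteq> 0"
  shows "\<exists>g\<in>Gc. spn Gc \<subseteq> spn (D \<union> (Gc - {g}))"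
proof -
  obtain A where A: "A \<subseteq> Gc" "c = sum id A" using c(2) unfolding spn_def by auto
  have fA: "finite A" using finite_subset[OF subset_UNIV fin] by blast
  from c(3) A have "A \<noteq> {}" by auto
  then obtain g where g: "g \<in> A" by auto
  let ?G = "D \<union> (Gc - {g})"
  have "c = g + sum id (A - {g})" using A(2) fA g by (simp add: sum.remove)
  then have "c + sum id (A - {g}) = g + (sum id (A - {g}) + sum id (A - {g}))"
    by (simp add: ac_simps c2)
  then have ge: "g = c + sum id (A - {g})" using c2 by simp
  have c1: "c \<in> spn ?G" using c(1) spn_mono[of D ?G] by auto
  have c3: "sum id (A - {g}) \<in> spn ?G"
    unfolding spn_def using A(1) by auto
  have "c + sum id (A - {g}) \<in> spn ?G" by (rule spn_add[OF c2 fin c1 c3])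
  then have gin: "g \<in> spn ?G" using ge by simp
  have "Gc \<subseteq> spn ?G"
  proof
    fix x assume "x \<in> Gc" then show "x \<in> spn ?G"
      using gin by (cases "x = g") (auto intro: spn_base)
  qed
  then show ?thesis using spn_sub[OF c2 fin] g A(1) by blast
qed


definition tri :: "(nat \<Rightarrow> 'v::ab_group_add) \<Rightarrow> (nat \<Rightarrow> 'v) \<Rightarrow> nat \<Rightarrow> 'v set" where
  "tri u w i = {u i, w i, u i + w i}"
definition rel :: "(nat \<Rightarrow> 'v::ab_group_add) \<Rightarrow> (nat \<Rightarrow> 'v) \<Rightarrow> nat set \<Rightarrow> ('v \<times> 'v) set" where
  "rel u w K = {(x,y). \<exists>i\<in>K. x \<in> tri u w i \<and> y \<in> tri u w i}"
definition comp :: "(nat \<Rightarrow> 'v::ab_group_add) \<Rightarrow> (nat \<Rightarrow> 'v) \<Rightarrow> nat set \<Rightarrow> 'v \<Rightarrow> 'v set" where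
  "comp u w K x = (rel u w K)\<^sup>* `` {x}"
definition Jset :: "(nat \<Rightarrow> 'v::ab_group_add) \<Rightarrow> (nat \<Rightarrow> 'v) \<Rightarrow> nat set \<Rightarrow> 'v \<Rightarrow> nat set" where
  "Jset u w K x = {i\<in>K. tri u w i \<subseteq> comp u w K x}"

lemma comp_refl: "x \<in> comp u w K x"
  unfolding comp_def by auto

lemma comp_trans: "y \<in> comp u w K x \<Longrightarrow> comp u w K y \<subseteq> comp u w K x"
  unfolding comp_def by (auto intro: rtrancl_trans)

lemma rel_sym: "sym (rel u w K)"
  unfolding rel_def sym_def by auto

lemma comp_sym: "y \<in> comp u w K x \<Longrightarrow> x \<in> comp u w K y"
  unfolding comp_def using sym_rtrancl[OF rel_sym[of u w K]] by (auto dest: symD)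

lemma comp_eq: "comp u w K x \<inter> comp u w K y \<noteq> {} \<Longrightarrow> comp u w K x = comp u w K y"
proof -
  assume "comp u w K x \<inter> comp u w K y \<noteq> {}"
  then obtain z where z: "z \<in> comp u w K x" "z \<in> comp u w K y" by auto
  have "comp u w K y \<subseteq> comp u w K x"
    using comp_trans[OF comp_sym[OF z(2)]] comp_trans[OF z(1)] comp_sym[OF z(2)]
    by (meson comp_trans subset_iff z(1))
  moreover have "comp u w K x \<subseteq> comp u w K y"
    by (meson comp_sym comp_trans subset_iff z)
  ultimately show ?thesis by auto
qed

lemma comp_closed: "i \<in> K \<Longrightarrow> z \<in> tri u w i \<Longrightarrow> z \<in> comp u w K x \<Longrightarrow> tri u w i \<subseteq> comp u w K x"
  unfolding comp_def
proof -
  assume a: "i \<in> K" "z \<in> tri u w i" "z \<in> (rel u w K)\<^sup>* `` {x}"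
  show "tri u w i \<subseteq> (rel u w K)\<^sup>* `` {x}"
  proof
    fix y assume "y \<in> tri u w i"
    then have "(z, y) \<in> rel u w K" using a unfolding rel_def by auto
    then show "y \<in> (rel u w K)\<^sup>* `` {x}" using a(3) by (auto intro: rtrancl_into_rtrancl)
  qed
qed

lemma comp_mono: "K \<subseteq> K' \<Longrightarrow> comp u w K x \<subseteq> comp u w K' x"
  unfolding comp_def
proof -
  assume "K \<subseteq> K'"
  then have "rel u w K \<subseteq> rel u w K'" unfolding rel_def by auto
  then show "(rel u w K)\<^sup>* `` {x} \<subseteq> (rel u w K')\<^sup>* `` {x}" using rtrancl_mono by blast
qed

lemma tri_ne: "u i \<in> tri u w i"
  unfolding tri_def by auto

lemma Jset_disj: "comp u w K s \<noteq> comp u w K t \<Longrightarrow> Jset u w K s \<inter> Jset u w K t = {}"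
  unfolding Jset_def using comp_eq[of u w K s t] tri_ne[of u i w for i] by blast

lemma card2: "finite J' \<Longrightarrow> J1 \<inter> J2 = {} \<Longrightarrow> j \<notin> J1 \<Longrightarrow> j \<notin> J2
   \<Longrightarrow> insert j (J1 \<union> J2) \<subseteq> J' \<Longrightarrow> card J1 + card J2 + 1 \<le> card J'"
proof -
  assume a: "finite J'" "J1 \<inter> J2 = {}" "j \<notin> J1" "j \<notin> J2" "insert j (J1 \<union> J2) \<subseteq> J'"
  then have f: "finite J1" "finite J2" by (auto intro: finite_subset)
  have "card (insert j (J1 \<union> J2)) = card J1 + card J2 + 1"
    using a f by (simp add: card_Un_disjoint)
  then show ?thesis using card_mono[OF a(1) a(5)] by simp
qed

lemma card3: "finite J' \<Longrightarrow> J1 \<inter> J2 = {} \<Longrightarrow> J1 \<inter> J3 = {} \<Longrightarrow> J2 \<inter> J3 = {}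
   \<Longrightarrow> j \<notin> J1 \<Longrightarrow> j \<notin> J2 \<Longrightarrow> j \<notin> J3
   \<Longrightarrow> insert j (J1 \<union> J2 \<union> J3) \<subseteq> J' \<Longrightarrow> card J1 + card J2 + card J3 + 1 \<le> card J'"
proof -
  assume a: "finite J'" "J1 \<inter> J2 = {}" "J1 \<inter> J3 = {}" "J2 \<inter> J3 = {}" "j \<notin> J1" "j \<notin> J2" "j \<notin> J3"
    "insert j (J1 \<union> J2 \<union> J3) \<subseteq> J'"
  then have f: "finite J1" "finite J2" "finite J3" by (auto intro: finite_subset)
  have "card (insert j (J1 \<union> J2 \<union> J3)) = card J1 + card J2 + card J3 + 1"
    using a f by (simp add: card_Un_disjoint Int_Un_distrib2)
  then show ?thesis using card_mono[OF a(1) a(8)] by simp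
qed


lemma comp_insert_disj:
  assumes j: "j \<notin> K" and d: "tri u w j \<inter> comp u w K x = {}"
  shows "comp u w (insert j K) x = comp u w K x"
proof
  show "comp u w K x \<subseteq> comp u w (insert j K) x" by (rule comp_mono) auto
  show "comp u w (insert j K) x \<subseteq> comp u w K x"
  proof
    fix y assume "y \<in> comp u w (insert j K) x"
    then have "(x, y) \<in> (rel u w (insert j K))\<^sup>*" unfolding comp_def by auto
    then show "y \<in> comp u w K x"
    proof (induction rule: rtrancl_induct)
      case base then show ?case by (rule comp_refl)
    next
      case (step y z)
      then obtain i where i: "i \<in> insert j K" "y \<in> tri u w i" "z \<in> tri u w i"
        unfolding rel_def by auto
      show ?case
      proof (cases "i = j")
        case True then show ?thesis using i step.IH d by auto
      next
        case False then have "i \<in> K" using i by auto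
        then show ?thesis using comp_closed[OF _ i(2) step.IH] i(3) by auto
      qed
    qed
  qed
qed

lemma comp_insert_meet:
  assumes j: "j \<notin> K" and y0: "y0 \<in> tri u w j" "y0 \<in> comp u w K x"
  shows "comp u w (insert j K) x = comp u w K (u j) \<union> comp u w K (w j) \<union> comp u w K (u j + w j)"
    (is "?L = ?U")
proof
  have tj: "tri u w j \<subseteq> ?U" unfolding tri_def using comp_refl by auto
  show "?L \<subseteq> ?U"
  proof
    fix y assume "y \<in> ?L"
    then have "(x, y) \<in> (rel u w (insert j K))\<^sup>*" unfolding comp_def by auto
    then show "y \<in> ?U"
    proof (induction rule: rtrancl_induct)
      case base
      have "x \<in> comp u w K y0" by (rule comp_sym[OF y0(2)])
      then show ?case using y0(1) unfolding tri_def by auto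
    next
      case (step y z)
      then obtain i where i: "i \<in> insert j K" "y \<in> tri u w i" "z \<in> tri u w i"
        unfolding rel_def by auto
      show ?case
      proof (cases "i = j")
        case True then show ?thesis using i tj by auto
      next
        case False then have iK: "i \<in> K" using i by auto
        from step.IH obtain t where "y \<in> comp u w K t" "t \<in> {u j, w j, u j + w j}" by auto
        then show ?thesis using comp_closed[OF iK i(2)] i(3) by blast
      qed
    qed
  qed
  show "?U \<subseteq> ?L"
  proof -
    have "\<And>t. t \<in> tri u w j \<Longrightarrow> comp u w K t \<subseteq> ?L"
    proof -
      fix t assume t: "t \<in> tri u w j"
      have "y0 \<in> ?L" using comp_mono[of K "insert j K" u w x] y0(2) by auto
      moreover have "(y0, t) \<in> rel u w (insert j K)" using y0(1) t unfolding rel_def by auto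
      ultimately have "t \<in> ?L" unfolding comp_def by (auto intro: rtrancl_into_rtrancl)
      then have "comp u w (insert j K) t \<subseteq> ?L" by (rule comp_trans)
      then show "comp u w K t \<subseteq> ?L" using comp_mono[of K "insert j K" u w t] by auto
    qed
    then show ?thesis unfolding tri_def by auto
  qed
qed


lemma main_comp:
  assumes c2: "\<And>x::'v::ab_group_add. x + x = 0" and fin: "finite (UNIV::'v set)"
  shows "finite K \<Longrightarrow> \<exists>G. card G \<le> card (Jset u w K (x::'v)) + 1 \<and> comp u w K x \<subseteq> spn G"
proof (induction K arbitrary: x rule: finite_induct)
  case empty
  have "comp u w {} x = {x}" unfolding comp_def rel_def by auto
  then show ?case by (intro exI[of _ "{x}"]) (auto intro: spn_base)
next
  case (insert j K)
  note IH = insert.IH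
  show ?case
  proof (cases "tri u w j \<inter> comp u w K x = {}")
    case True
    have ce: "comp u w (insert j K) x = comp u w K x" by (rule comp_insert_disj[OF insert.hyps(2) True])
    have "Jset u w (insert j K) x = Jset u w K x"
      unfolding Jset_def ce using True tri_ne[of u j w] by auto
    then show ?thesis using IH[of x] ce by simp
  next
    case False
    then obtain y0 where y0: "y0 \<in> tri u w j" "y0 \<in> comp u w K x" by auto
    define a where "a = u j"
    define b where "b = w j"
    define c where "c = u j + w j"
    have cab: "c = a + b" unfolding a_def b_def c_def ..
    have ce: "comp u w (insert j K) x = comp u w K a \<union> comp u w K b \<union> comp u w K c"
      unfolding a_def b_def c_def by (rule comp_insert_meet[OF insert.hyps(2) y0])
    let ?J' = "Jset u w (insert j K) x"
    have fJ': "finite ?J'" using insert.hyps(1) unfolding Jset_def by auto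
    have tj: "tri u w j \<subseteq> comp u w (insert j K) x"
      unfolding ce tri_def a_def[symmetric] b_def[symmetric] c_def[symmetric]
      using comp_refl[of a u w K] comp_refl[of b u w K] comp_refl[of c u w K] cab by auto
    have Jsub: "insert j (Jset u w K a \<union> Jset u w K b \<union> Jset u w K c) \<subseteq> ?J'"
      using tj unfolding Jset_def ce by auto
    have jn: "j \<notin> Jset u w K t" for t using insert.hyps(2) unfolding Jset_def by auto
    obtain Ga where Ga: "card Ga \<le> card (Jset u w K a) + 1" "comp u w K a \<subseteq> spn Ga" using IH by blast
    obtain Gb where Gb: "card Gb \<le> card (Jset u w K b) + 1" "comp u w K b \<subseteq> spn Gb" using IH by blast
    obtain Gc where Gc: "card Gc \<le> card (Jset u w K c) + 1" "comp u w K c \<subseteq> spn Gc" using IH by blast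
    have fin_all: "finite (S::'v set)" for S by (rule finite_subset[OF subset_UNIV fin])
    consider (i) "comp u w K a = comp u w K b" "comp u w K c = comp u w K a"
      | (ii) "comp u w K a = comp u w K b" "comp u w K c \<noteq> comp u w K a"
      | (iii) "comp u w K a \<noteq> comp u w K b" "comp u w K c = comp u w K a \<or> comp u w K c = comp u w K b"
      | (iv) "comp u w K a \<noteq> comp u w K b" "comp u w K c \<noteq> comp u w K a" "comp u w K c \<noteq> comp u w K b"
      by blast
    then show ?thesis
    proof cases
      case i
      have "card (Jset u w K a) \<le> card ?J'" using Jsub fJ' by (intro card_mono) auto
      then show ?thesis using Ga i ce by (intro exI[of _ Ga]) auto
    next
      case ii
      have "card (Jset u w K a) + card (Jset u w K c) + 1 \<le> card ?J'"
        by (rule card2[OF fJ' Jset_disj jn jn]) (use ii Jsub in auto)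
      moreover have "card (Ga \<union> Gc) \<le> card Ga + card Gc" by (rule card_Un_le)
      moreover have "comp u w (insert j K) x \<subseteq> spn (Ga \<union> Gc)"
        using ii Ga(2) Gc(2) spn_mono[of Ga "Ga \<union> Gc"] spn_mono[of Gc "Ga \<union> Gc"] ce by auto
      ultimately show ?thesis using Ga(1) Gc(1) by (intro exI[of _ "Ga \<union> Gc"]) auto
    next
      case iii
      have "card (Jset u w K a) + card (Jset u w K b) + 1 \<le> card ?J'"
        by (rule card2[OF fJ' Jset_disj jn jn]) (use iii Jsub in auto)
      moreover have "card (Ga \<union> Gb) \<le> card Ga + card Gb" by (rule card_Un_le)
      moreover have "comp u w (insert j K) x \<subseteq> spn (Ga \<union> Gb)"
        using iii Ga(2) Gb(2) spn_mono[of Ga "Ga \<union> Gb"] spn_mono[of Gb "Ga \<union> Gb"] ce by auto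
      ultimately show ?thesis using Ga(1) Gb(1) by (intro exI[of _ "Ga \<union> Gb"]) auto
    next
      case iv
      have cardJ: "card (Jset u w K a) + card (Jset u w K b) + card (Jset u w K c) + 1 \<le> card ?J'"
        by (rule card3[OF fJ' Jset_disj Jset_disj Jset_disj jn jn jn]) (use iv Jsub in auto)
      let ?D = "Ga \<union> Gb"
      have aD: "a \<in> spn ?D" using Ga(2) comp_refl[of a u w K] spn_mono[of Ga ?D] by auto
      have bD: "b \<in> spn ?D" using Gb(2) comp_refl[of b u w K] spn_mono[of Gb ?D] by auto
      have cD: "c \<in> spn ?D" unfolding cab by (rule spn_add[OF c2 fin aD bD])
      have cC: "c \<in> spn Gc" using Gc(2) comp_refl[of c u w K] by auto
      have cnz: "c \<noteq> 0"
      proof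
        assume "c = 0"
        then have "a + b = 0" using cab by simp
        then have "a + (a + b) = a" by simp
        then have "b = a" using c2[of a] by (simp add: add.assoc[symmetric])
        then show False using iv(1) by simp
      qed
      obtain g where g: "g \<in> Gc" "spn Gc \<subseteq> spn (?D \<union> (Gc - {g}))"
        using spn_exchange[OF c2 fin cD cC cnz] by blast
      let ?G = "?D \<union> (Gc - {g})"
      have "card ?G \<le> card ?D + card (Gc - {g})" by (rule card_Un_le)
      moreover have "card ?D \<le> card Ga + card Gb" by (rule card_Un_le)
      moreover have "card (Gc - {g}) = card Gc - 1" using g(1) fin_all by simp
      moreover have "card Gc \<ge> 1" using g(1) fin_all[of Gc] by (simp add: Suc_le_eq card_gt_0_iff)
          (use g(1) in auto)
      ultimately have cG: "card ?G \<le> card ?J' + 1" using Ga(1) Gb(1) Gc(1) cardJ by linarith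
      have "comp u w (insert j K) x \<subseteq> spn ?G"
        using Ga(2) Gb(2) Gc(2) g(2) spn_mono[of Ga ?G] spn_mono[of Gb ?G] ce by auto
      then show ?thesis using cG by blast
    qed
  qed
qed


lemma mom_sumS: assumes c2: "\<And>x::'v::ab_group_add. x + x = 0"
  shows "finite S \<Longrightarrow> mom (C::'v set) (sum f S) = (\<Sum>i\<in>S. mom C (f i))"
  by (induction S rule: finite_induct) (simp_all add: mom_add[OF c2] mom_zero)

lemma aug_univ: assumes fin: "finite (UNIV::'v set)"
  shows "augmentation (f::'v galg) = (\<Sum>v\<in>UNIV. Poly_Mapping.lookup f v)"
  unfolding augmentation_def
  by (rule sum.mono_neutral_left[OF fin]) (auto simp: in_keys_iff)

lemma aug_add: assumes fin: "finite (UNIV::'v set)"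
  shows "augmentation ((f::'v galg) + g) = augmentation f + augmentation g"
  by (simp only: aug_univ[OF fin] lookup_add sum.distrib)

lemma aug_X: assumes fin: "finite (UNIV::'v::monoid_add set)"
  shows "augmentation (X (v::'v)) = 1"
  unfolding aug_univ[OF fin] X_def lookup_single when_def
  using fin by (simp add: sum.delta)

lemma aug_pf_factor: assumes fin: "finite (UNIV::'v::ab_group_add set)"
  shows "1 + X (v::'v) \<in> augI"
  unfolding augI_def using aug_add[OF fin, of 1 "X v"] aug_X[OF fin, of v] aug_X[OF fin, of 0]
  by (simp add: X_zero)

lemma telescope:
  fixes s :: "nat \<Rightarrow> 'v::ab_group_add" and e :: "nat \<Rightarrow> 'v"
  defines "s \<equiv> \<lambda>m. \<Sum>j=1..m. e j"
  shows "(\<Sum>i<m. pfister2 (s (i+1)) (e (i+2))) = of_nat (m+2) + X (s (m+1)) + (\<Sum>j=1..m+1. X (e j))"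
proof (induction m)
  case 0
  have "s 1 = e 1" unfolding s_def by simp
  then show ?case by (simp add: galg_add_self)
next
  case (Suc m)
  let ?A = "s (m+1)" and ?E = "e (m+2)"
  have sA: "s (Suc m + 1) = ?A + ?E" unfolding s_def by simp
  have sB: "(\<Sum>j=1..Suc m+1. X (e j)) = (\<Sum>j=1..m+1. X (e j)) + X ?E" by simp
  have "(\<Sum>i<Suc m. pfister2 (s (i+1)) (e (i+2)))
      = of_nat (m+2) + X ?A + (\<Sum>j=1..m+1. X (e j)) + pfister2 ?A ?E"
    using Suc by simp
  also have "\<dots> = of_nat (m+2) + 1 + X (?A + ?E) + ((\<Sum>j=1..m+1. X (e j)) + X ?E) + (X ?A + X ?A)"
    unfolding pf_expand by (simp add: algebra_simps)
  also have "\<dots> = of_nat (Suc m+2) + X (s (Suc m + 1)) + (\<Sum>j=1..Suc m+1. X (e j))"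
    unfolding sA sB galg_add_self by (simp add: algebra_simps)
  finally show ?case .
qed


theorem proposition1p4:
  fixes n :: nat and e :: "nat \<Rightarrow> 'v::ab_group_add"
  assumes char2: "\<And>x::'v. x + x = 0"
    and n_gt: "n > 1"
    and basis: "bij_betw (\<lambda>S. \<Sum>i\<in>S. e i) (Pow {1..n}) (UNIV :: 'v set)"
  shows "(let e0 = (\<Sum>i=1..n. e i);
              \<xi> = of_nat (n + 1) + X e0 + (\<Sum>i=1..n. X (e i)) :: 'v galg
          in \<xi> \<in> augI2 \<and> Pf2 \<xi> = n - 1)"
proof -
  define e0 where "e0 = (\<Sum>i=1..n. e i)"
  define \<xi> :: "'v galg" where "\<xi> = of_nat (n + 1) + X e0 + (\<Sum>i=1..n. X (e i))"
  have surj: "(\<lambda>S. \<Sum>i\<in>S. e i) ` Pow {1..n} = UNIV" using bij_betw_imp_surj_on[OF basis] .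
  have fin: "finite (UNIV::'v set)"
  proof -
    have "finite ((\<lambda>S. \<Sum>i\<in>S. e i) ` Pow {1..n})" by simp
    then show ?thesis unfolding surj .
  qed
  have cardU: "card (UNIV::'v set) = 2 ^ n"
    using bij_betw_same_card[OF basis] by (simp add: card_Pow)
  define s where "s = (\<lambda>m. \<Sum>j=1..m. e j)"
  define u where "u = (\<lambda>i. s (i+1))"
  define w where "w = (\<lambda>i::nat. e (i+2))"
  have nn: "n - 1 + 2 = n + 1" "n - 1 + 1 = n" using n_gt by auto
  have rep: "\<xi> = (\<Sum>i<n-1. pfister2 (u i) (w i))"
    using telescope[of e "n-1"] unfolding nn \<xi>_def e0_def u_def w_def s_def by simp
  have I2: "\<xi> \<in> augI2"
    unfolding augI2_def
    apply (rule CollectI)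
    apply (rule exI[of _ "n-1"], rule exI[of _ "\<lambda>i. 1 + X (u i)"], rule exI[of _ "\<lambda>i. 1 + X (w i)"])
    using rep aug_pf_factor[OF fin] unfolding pfister2_def by auto
  have lower: "n - 1 \<le> k" if rk: "\<xi> = (\<Sum>i<k. pfister2 (u' i) (w' i))" for k u' w'
  proof -
    let ?K = "{..<k}"
    obtain G where G: "card G \<le> card (Jset u' w' ?K e0) + 1" "comp u' w' ?K e0 \<subseteq> spn G"
      using main_comp[OF char2 fin, of ?K u' w' e0] by auto
    define C where "C = comp u' w' ?K e0"
    have "card (Jset u' w' ?K e0) \<le> k" using card_mono[of ?K "Jset u' w' ?K e0"] unfolding Jset_def by auto
    then have cardG: "card G \<le> k + 1" using G(1) by simp
    have m0: "mom C \<xi> = 0"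
    proof -
      have "mom C (pfister2 (u' i) (w' i)) = 0" if i: "i < k" for i
      proof -
        have cl: "tri u' w' i \<inter> C \<noteq> {} \<Longrightarrow> tri u' w' i \<subseteq> C"
          unfolding C_def using comp_closed[of i ?K _ u' w' e0] i by blast
        have "u' i \<in> C \<longleftrightarrow> w' i \<in> C" "u' i \<in> C \<longleftrightarrow> u' i + w' i \<in> C"
          using cl unfolding tri_def by blast+
        then show ?thesis by (rule mom_pf[OF fin char2])
      qed
      then show ?thesis unfolding rk mom_sum[OF char2] by simp
    qed
    have e0C: "e0 \<in> C" unfolding C_def by (rule comp_refl)
    have m1: "mom C \<xi> = e0 + (\<Sum>i=1..n. if e i \<in> C then e i else 0)"
      unfolding \<xi>_def mom_add[OF char2] mom_of_nat[OF fin char2] mom_X[OF fin] mom_sumS[OF char2 finite_atLeastAtMost]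
      using e0C by simp
    define S where "S = {i\<in>{1..n}. e i \<notin> C}"
    have SA: "S \<subseteq> {1..n}" unfolding S_def by auto
    have sE: "{1..n} \<inter> {x. e x \<in> C} = {1..n} - S" unfolding S_def by blast
    have "(\<Sum>i=1..n. if e i \<in> C then e i else 0) = sum e ({1..n} - S)"
      unfolding sum.If_cases[OF finite_atLeastAtMost] sE by simp
    moreover have "e0 = sum e ({1..n} - S) + sum e S"
      unfolding e0_def using sum.subset_diff[OF SA finite_atLeastAtMost] .
    ultimately have "mom C \<xi> = sum e S + (sum e ({1..n} - S) + sum e ({1..n} - S))"
      using m1 by (simp add: ac_simps)
    then have eq: "sum e S = sum e {}" using m0 char2 by simp
    have inj: "inj_on (\<lambda>S. \<Sum>i\<in>S. e i) (Pow {1..n})" using bij_betw_imp_inj_on[OF basis] .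
    have "S = {}" using inj_onD[OF inj eq] SA by auto
    then have eC: "e i \<in> C" if "i \<in> {1..n}" for i using that unfolding S_def by auto
    have "UNIV \<subseteq> spn G"
    proof
      fix v :: 'v
      have "v \<in> (\<lambda>S. \<Sum>i\<in>S. e i) ` Pow {1..n}" unfolding surj by simp
      then obtain T where T: "T \<subseteq> {1..n}" "v = sum e T" by blast
      have "finite T" using T(1) finite_subset[OF _ finite_atLeastAtMost] by blast
      moreover have "e i \<in> spn G" if "i \<in> T" for i
      proof -
        have "i \<in> {1..n}" using T(1) that by blast
        then have "e i \<in> C" by (rule eC)
        then show ?thesis using G(2) unfolding C_def by blast
      qed
      ultimately show "v \<in> spn G" unfolding T(2) by (rule spn_sum[OF char2 fin])
    qed
    then have "spn G = UNIV" by auto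
    then have "card (UNIV::'v set) \<le> card (spn G)" by simp
    also have "\<dots> \<le> 2 ^ card G" by (rule card_spn) (rule finite_subset[OF subset_UNIV fin])
    also have "\<dots> \<le> 2 ^ (k+1)" using cardG by (intro power_increasing) auto
    finally have "(2::nat) ^ n \<le> 2 ^ (k+1)" using cardU by simp
    moreover have two: "(1::nat) < 2" by simp
    ultimately have "n \<le> k + 1" using power_increasing_iff[OF two] by blast
    then show ?thesis by simp
  qed
  have Pf: "Pf2 \<xi> = n - 1"
    unfolding Pf2_def
  proof (rule Least_equality)
    show "\<exists>u w. \<xi> = (\<Sum>i<n-1. pfister2 (u i) (w i))" using rep by blast
    show "\<And>y. \<exists>u w. \<xi> = (\<Sum>i<y. pfister2 (u i) (w i)) \<Longrightarrow> n - 1 \<le> y" using lower by blast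
  qed
  show ?thesis unfolding Let_def e0_def[symmetric] \<xi>_def[symmetric] using I2 Pf by simp
qed

end
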